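(* Let $(M_t)_{t\ge0}$ be a pure-jump Lévy process with characteristic function $E[e^{iuM_t}]=\exp\big(t\int_{-1}^1(e^{iux}-1-iux)\,\mu(dx)\big)$, where the Lévy measure $\mu$ satisfies $\operatorname{supp}(\mu)\subset[-1,1]$ and there exists $\alpha\in(0,2)$ with $\int_{-v}^vx^2\,\mu(dx)=O(v^{2-\alpha})$ as $v\downarrow0$. Let $f\in C^\infty(\mathbb R)$ satisfy $f(x)=x^2$ for $|x|\le1$, $f(x)=0$ for $|x|>2$ and $f(x)\in[0,2]$ for $1<|x|\le2$, and set $f^v(x)=v^2f(x/v)$ for $v>0$. Then for all $\beta\in(0,1/2)$, $$E\big[f^{t^\beta}(M_t)\big]=O\big(t^{1+\beta(2-\alpha)}\big)\quad\text{as }t\downarrow0.$$ *)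

theory Defs
  imports "HOL-Probability.Probability" "HOL-Library.Landau_Symbols"
begin

definition C_infinity :: "(real \<Rightarrow> real) \<Rightarrow> bool" where
  "C_infinity f \<longleftrightarrow> (\<forall>n x. ((deriv ^^ n) f) differentiable (at x))"

definition levy_measure :: "real measure \<Rightarrow> bool" where
  "levy_measure \<mu> \<longleftrightarrow> sets \<mu> = sets borel \<and> emeasure \<mu> {0} = 0 \<and>
     (\<integral>\<^sup>+ x. ennreal (min 1 (x\<^sup>2)) \<partial>\<mu>) < \<infinity>"

definition levy_process :: "'a measure \<Rightarrow> (real \<Rightarrow> 'a \<Rightarrow> real) \<Rightarrow> bool" where
  "levy_process P M \<longleftrightarrow> prob_space P \<and>
     (\<forall>t\<ge>0. M t \<in> borel_measurable P) \<and>
     (AE \<omega> in P. M 0 \<omega> = 0) \<and>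
     (\<forall>s t. 0 \<le> s \<and> s \<le> t \<longrightarrow>
        distr P borel (\<lambda>\<omega>. M t \<omega> - M s \<omega>) = distr P borel (M (t - s))) \<and>
     (\<forall>(n::nat) (ts::nat \<Rightarrow> real). 0 \<le> ts 0 \<and> (\<forall>i<n. ts i < ts (Suc i)) \<longrightarrow>
        prob_space.indep_vars P (\<lambda>_. borel) (\<lambda>i \<omega>. M (ts (Suc i)) \<omega> - M (ts i) \<omega>) {..<n}) \<and>
     (AE \<omega> in P. \<forall>t\<ge>0. continuous (at_right t) (\<lambda>s. M s \<omega>) \<and>
        (t > 0 \<longrightarrow> (\<exists>l. ((\<lambda>s. M s \<omega>) \<longlongrightarrow> l) (at_left t))))"

definition rescale :: "(real \<Rightarrow> real) \<Rightarrow> real \<Rightarrow> real \<Rightarrow> real" where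
  "rescale f v x = v\<^sup>2 * f (x / v)"

end

theory Submission
  imports Defs
begin


lemma dyadic_pw:
  fixes w x :: real assumes w: "0 < w"
  shows "indicator {-1..1} x * indicator {x. w < \<bar>x\<bar> \<and> \<bar>x\<bar> \<le> w*2^N} x
     \<le> (\<Sum>k\<in>{1..N}. 4/(w*2^k)^2 * (indicator {-1..1} x * indicator {-(w*2^k)..w*2^k} x * x^2))"
proof (induction N)
  case 0
  then show ?case using w by (auto simp: indicator_def)
next
  case (Suc N)
  have nn: "0 \<le> (\<Sum>k\<in>{1..N}. 4/(w*2^k)^2 * (indicator {-1..1} x * indicator {-(w*2^k)..w*2^k} x * x^2))"
    by (intro sum_nonneg mult_nonneg_nonneg) simp_all
  have nt: "0 \<le> 4/(w*2^Suc N)^2 * (indicator {-1..1} x * indicator {-(w*2^Suc N)..w*2^Suc N} x * x^2)"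
    by (auto simp: indicator_def)
  have split: "(\<Sum>k\<in>{1..Suc N}. 4/(w*2^k)^2 * (indicator {-1..1} x * indicator {-(w*2^k)..w*2^k} x * x^2))
     = (\<Sum>k\<in>{1..N}. 4/(w*2^k)^2 * (indicator {-1..1} x * indicator {-(w*2^k)..w*2^k} x * x^2))
       + 4/(w*2^Suc N)^2 * (indicator {-1..1} x * indicator {-(w*2^Suc N)..w*2^Suc N} x * x^2)"
    by (simp add: sum.cl_ivl_Suc)
  show ?case
  proof (cases "\<bar>x\<bar> \<le> w*2^N")
    case True
    have "w*2^N \<le> w*2^Suc N" using w by simp
    then have "indicator {x. w < \<bar>x\<bar> \<and> \<bar>x\<bar> \<le> w*2^Suc N} x = (indicator {x. w < \<bar>x\<bar> \<and> \<bar>x\<bar> \<le> w*2^N} x :: real)"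
      using True by (auto simp: indicator_def)
    then have "indicator {-1..1} x * indicator {x. w < \<bar>x\<bar> \<and> \<bar>x\<bar> \<le> w*2^Suc N} x = (indicator {-1..1} x * indicator {x. w < \<bar>x\<bar> \<and> \<bar>x\<bar> \<le> w*2^N} x :: real)"
      by simp
    then show ?thesis using Suc.IH nt split by linarith
  next
    case False
    show ?thesis
    proof (cases "x \<in> {-1..1} \<and> \<bar>x\<bar> \<le> w*2^Suc N")
      case True
      have pos: "0 < w*2^N" using w by simp
      have sq: "(w*2^N)^2 \<le> x^2" using power_mono[of "w*2^N" "\<bar>x\<bar>" 2] False pos by simp
      have e: "(w*2^Suc N)^2 = 4*(w*2^N)^2" by (simp add: power2_eq_square)
      have p2: "0 < (w*2^N)^2" using pos by (rule zero_less_power)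
      have one: "1 \<le> x^2/(w*2^N)^2" using sq p2 by (simp add: le_divide_eq)
      have gen: "\<And>a::real. a \<noteq> 0 \<Longrightarrow> 4/(4*a)*x^2 = x^2/a" by simp
      have eq: "4/(w*2^Suc N)^2 * x^2 = x^2/(w*2^N)^2" unfolding e by (rule gen) (use p2 in simp)
      have "1 \<le> 4/(w*2^Suc N)^2 * x^2" using one unfolding eq .
      moreover have "x \<in> {-(w*2^Suc N)..w*2^Suc N}" using True by auto
      ultimately have "1 \<le> 4/(w*2^Suc N)^2 * (indicator {-1..1} x * indicator {-(w*2^Suc N)..w*2^Suc N} x * x^2)"
        using True by simp
      moreover have "indicator {-1..1} x * indicator {x. w < \<bar>x\<bar> \<and> \<bar>x\<bar> \<le> w*2^Suc N} x \<le> (1::real)"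
        by (auto simp: indicator_def)
      ultimately show ?thesis using split nn by linarith
    next
      case False
      then have "indicator {-1..1} x * indicator {x. w < \<bar>x\<bar> \<and> \<bar>x\<bar> \<le> w*2^Suc N} x = (0::real)"
        by (auto simp: indicator_def)
      then show ?thesis using split nn nt by linarith
    qed
  qed
qed

lemma T1: "cos (x::real) \<le> 1 - x^2/2 + x^4/24"
proof -
  have "cmod (iexp x - (\<Sum>k \<le> 3. (\<i> * x)^k / fact k)) \<le> \<bar>x\<bar>^4 / fact 4"
    using iexp_approx1[of x 3] by (simp add: numeral_eq_Suc)
  moreover have "\<bar>Re (iexp x - (\<Sum>k \<le> 3. (\<i> * x)^k / fact k))\<bar> \<le> cmod (iexp x - (\<Sum>k \<le> 3. (\<i> * x)^k / fact k))"
    by (rule abs_Re_le_cmod)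
  moreover have "Re (iexp x - (\<Sum>k \<le> 3. (\<i> * x)^k / fact k)) = cos x - 1 + x^2/2"
    by (simp add: numeral_eq_Suc Re_exp fact_numeral power2_eq_square)
  moreover have "\<bar>x\<bar>^4 = x^4" by (simp add: power_even_abs)
  moreover have "\<bar>x\<bar>^4 / fact 4 = \<bar>x\<bar>^4/24" by (simp add: fact_numeral)
  ultimately show ?thesis by linarith
qed

lemma fbound:
  fixes f :: "real \<Rightarrow> real"
  assumes f_inner: "\<And>x. \<bar>x\<bar> \<le> 1 \<Longrightarrow> f x = x\<^sup>2"
    and f_outer: "\<And>x. \<bar>x\<bar> > 2 \<Longrightarrow> f x = 0"
    and f_mid: "\<And>x. 1 < \<bar>x\<bar> \<Longrightarrow> \<bar>x\<bar> \<le> 2 \<Longrightarrow> 0 \<le> f x \<and> f x \<le> 2"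
  shows "0 \<le> f y \<and> f y \<le> 6 * (1 - cos y)"
proof -
  have c: "cos y \<le> 1 - y^2/2 + y^4/24" by (rule T1)
  have y4: "y^4 = (y^2)^2" by simp
  consider "\<bar>y\<bar> \<le> 1" | "1 < \<bar>y\<bar> \<and> \<bar>y\<bar> \<le> 2" | "\<bar>y\<bar> > 2" by linarith
  then show ?thesis
  proof cases
    case 1
    have s: "y^2 \<le> 1" using power_mono[of "\<bar>y\<bar>" 1 2] 1 by simp
    have "y^2 * y^2 \<le> y^2 * 1" by (rule mult_left_mono[OF s]) simp
    then have "(y^2)^2 \<le> y^2" by (simp add: power2_eq_square)
    then have b4: "y^4 \<le> y^2" unfolding y4 .
    have L: "a \<le> 6*(1-c)" if "b \<le> a" "c \<le> 1 - a/2 + b/24" "0 \<le> a" for a b c :: real using that by argo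
    have "y^2 \<le> 6*(1 - cos y)" using L[OF b4 c] by simp
    then show ?thesis using f_inner[OF 1] by simp
  next
    case 2
    have s1: "1 \<le> y^2" using power_mono[of 1 "\<bar>y\<bar>" 2] 2 by simp
    have s2: "y^2 \<le> 4" using power_mono[of "\<bar>y\<bar>" 2 2] 2 by simp
    have "(y^2 - 1) * (y^2 - 4) \<le> 0" using s1 s2 by (simp add: mult_nonneg_nonpos)
    then have "(y^2)^2 \<le> 5*y^2 - 4" by (simp add: algebra_simps power2_eq_square)
    then have b4: "y^4 \<le> 5*y^2 - 4" unfolding y4 .
    have L: "c \<le> 2/3" if "b \<le> 5*a - 4" "c \<le> 1 - a/2 + b/24" "1 \<le> a" for a b c :: real using that by argo
    have "cos y \<le> 2/3" using L[OF b4 c s1] .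
    moreover have "0 \<le> f y \<and> f y \<le> 2" using f_mid 2 by simp
    ultimately show ?thesis by argo
  next
    case 3
    then show ?thesis using f_outer[OF 3] by simp
  qed
qed


lemma T2: "\<bar>sin (x::real) - x\<bar> \<le> \<bar>x\<bar>^3/6"
proof -
  have "cmod (iexp x - (\<Sum>k \<le> 2. (\<i> * x)^k / fact k)) \<le> \<bar>x\<bar>^3 / fact 3"
    using iexp_approx1[of x 2] by (simp add: numeral_eq_Suc)
  moreover have "\<bar>Im (iexp x - (\<Sum>k \<le> 2. (\<i> * x)^k / fact k))\<bar> \<le> cmod (iexp x - (\<Sum>k \<le> 2. (\<i> * x)^k / fact k))"
    by (rule abs_Im_le_cmod)
  moreover have "Im (iexp x - (\<Sum>k \<le> 2. (\<i> * x)^k / fact k)) = sin x - x"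
    by (simp add: numeral_eq_Suc Im_exp fact_numeral power2_eq_square)
  moreover have "\<bar>x\<bar>^3 / fact 3 = \<bar>x\<bar>^3/6" by (simp add: fact_numeral)
  ultimately show ?thesis by linarith
qed

lemma T3: "1 - cos (x::real) \<le> x^2/2"
proof -
  have "cmod (iexp x - (\<Sum>k \<le> 1. (\<i> * x)^k / fact k)) \<le> \<bar>x\<bar>^2 / fact 2"
    using iexp_approx1[of x 1] by (simp add: numeral_eq_Suc)
  moreover have "\<bar>Re (iexp x - (\<Sum>k \<le> 1. (\<i> * x)^k / fact k))\<bar> \<le> cmod (iexp x - (\<Sum>k \<le> 1. (\<i> * x)^k / fact k))"
    by (rule abs_Re_le_cmod)
  moreover have "Re (iexp x - (\<Sum>k \<le> 1. (\<i> * x)^k / fact k)) = cos x - 1"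
    by (simp add: numeral_eq_Suc Re_exp)
  moreover have "\<bar>x\<bar>^2 / fact 2 = x^2/2" by (simp add: fact_numeral)
  ultimately show ?thesis by linarith
qed

lemma T4: "cmod (iexp x - 1 - \<i> * complex_of_real x) \<le> x^2/2"
proof -
  have "cmod (iexp x - (\<Sum>k \<le> 1. (\<i> * x)^k / fact k)) \<le> \<bar>x\<bar>^2 / fact 2"
    using iexp_approx1[of x 1] by (simp add: numeral_eq_Suc)
  moreover have "iexp x - (\<Sum>k \<le> 1. (\<i> * x)^k / fact k) = iexp x - 1 - \<i> * complex_of_real x"
    by simp
  moreover have "\<bar>x\<bar>^2 / fact 2 = x^2/2" by (simp add: fact_numeral)
  ultimately show ?thesis by (simp add: diff_diff_eq)
qed

lemma int_mu_gen:
  fixes \<mu> :: "real measure" and g :: "real \<Rightarrow> 'b::{banach,second_countable_topology}"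
  assumes lm: "levy_measure \<mu>" and g: "g \<in> borel_measurable borel"
    and b: "\<And>x. norm (g x) \<le> c * min 1 (x^2)"
  shows "integrable \<mu> g"
proof -
  have s: "sets \<mu> = sets borel" using lm by (simp add: levy_measure_def)
  have mb: "borel_measurable \<mu> = borel_measurable borel"
    by (rule measurable_cong_sets[OF s refl])
  have i1: "integrable \<mu> (\<lambda>x. min 1 (x^2))"
    by (rule integrableI_nonneg) (use lm in \<open>auto simp: levy_measure_def mb\<close>)
  have i2: "integrable \<mu> (\<lambda>x. c * min 1 (x^2))" using i1 by simp
  have b': "norm (g x) \<le> \<bar>c * min 1 (x^2)\<bar>" for x using b[of x] by (meson abs_ge_self order_trans)
  show ?thesis
    by (rule Bochner_Integration.integrable_bound[OF i2]) (use g b' in \<open>auto simp: mb intro!: always_eventually\<close>)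
qed

lemma sqI: assumes "x \<in> {-1..1}" shows "x^2 \<le> (1::real)"
proof -
  have "\<bar>x\<bar> \<le> 1" using assms by auto
  then show ?thesis using power_mono[of "\<bar>x\<bar>" 1 2] by simp
qed

lemma int_I:
  fixes \<mu> :: "real measure" and g :: "real \<Rightarrow> 'b::{banach,second_countable_topology}"
  assumes lm: "levy_measure \<mu>" and g: "g \<in> borel_measurable borel" and c: "0 \<le> c"
    and b: "\<And>x. x \<in> {-1..1} \<Longrightarrow> norm (g x) \<le> c * x^2"
  shows "integrable \<mu> (\<lambda>x. indicator {-1..1} x *\<^sub>R g x)"
proof (rule int_mu_gen[OF lm, where c=c])
  show "(\<lambda>x. indicator {-1..1} x *\<^sub>R g x) \<in> borel_measurable borel" using g by measurable
  fix x :: real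
  show "norm (indicator {-1..1} x *\<^sub>R g x) \<le> c * min 1 (x^2)"
  proof (cases "x \<in> {-1..1}")
    case True
    then have "min 1 (x^2) = x^2" using sqI[OF True] by (simp add: min_def)
    then show ?thesis using True b by simp
  qed (use c in simp)
qed

lemma int_I_real:
  fixes \<mu> :: "real measure" and g :: "real \<Rightarrow> real"
  assumes lm: "levy_measure \<mu>" and g: "g \<in> borel_measurable borel" and c: "0 \<le> c"
    and b: "\<And>x. x \<in> {-1..1} \<Longrightarrow> \<bar>g x\<bar> \<le> c * x^2"
  shows "integrable \<mu> (\<lambda>x. indicator {-1..1} x * g x)"
  using int_I[OF lm g c] b by simp




lemma H_global:
  fixes \<mu> :: "real measure" and \<alpha> :: real
  assumes lm: "levy_measure \<mu>"
    and growth: "(\<lambda>v. set_lebesgue_integral \<mu> {-v..v} (\<lambda>x. x\<^sup>2)) \<in> O[at_right 0](\<lambda>v. v powr (2 - \<alpha>))"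
    and alpha: "\<alpha> < 2"
  shows "\<exists>C>0. \<forall>s>0. (\<integral>x. indicator {-1..1} x * (indicator {-s..s} x * x^2) \<partial>\<mu>) \<le> C * s powr (2-\<alpha>)"
proof -
  define G1 where "G1 = (\<integral>x. indicator {-1..1} x * x^2 \<partial>\<mu>)"
  have intH: "integrable \<mu> (\<lambda>x. indicator {-1..1} x * (indicator {-s..s} x * x^2 :: real))" for s
    by (rule int_I_real[OF lm _ zero_le_one]) (auto simp: indicator_def)
  have intG: "integrable \<mu> (\<lambda>x. indicator {-1..1} x * (x^2 :: real))"
    by (rule int_I_real[OF lm _ zero_le_one]) auto
  have G1nn: "0 \<le> G1" unfolding G1_def by (rule Bochner_Integration.integral_nonneg) simp
  obtain c where c: "c > 0" and ev: "eventually (\<lambda>v. norm (set_lebesgue_integral \<mu> {-v..v} (\<lambda>x. x\<^sup>2)) \<le> c * norm (v powr (2 - \<alpha>))) (at_right 0)"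
    using landau_o.bigE[OF growth] by blast
  then obtain b where b: "b > 0" and hb: "\<And>y. y > 0 \<Longrightarrow> y < b \<Longrightarrow> norm (set_lebesgue_integral \<mu> {-y..y} (\<lambda>x. x\<^sup>2)) \<le> c * norm (y powr (2 - \<alpha>))"
    unfolding eventually_at_right_field by auto
  define b' where "b' = min b 1"
  have b'pos: "0 < b'" using b by (simp add: b'_def)
  have bp: "0 < b' powr (2-\<alpha>)" using b'pos by simp
  define C where "C = c + G1 / b' powr (2-\<alpha>)"
  have Cpos: "C > 0" unfolding C_def using c G1nn bp by (simp add: add_pos_nonneg)
  have "\<forall>s>0. (\<integral>x. indicator {-1..1} x * (indicator {-s..s} x * x^2) \<partial>\<mu>) \<le> C * s powr (2-\<alpha>)"
  proof (intro allI impI)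
    fix s :: real assume s: "0 < s"
    have spos: "0 \<le> s powr (2-\<alpha>)" by simp
    show "(\<integral>x. indicator {-1..1} x * (indicator {-s..s} x * x^2) \<partial>\<mu>) \<le> C * s powr (2-\<alpha>)"
    proof (cases "s < b'")
      case True
      have eqf: "(\<lambda>x. indicator {-1..1} x * (indicator {-s..s} x * x^2)) = (\<lambda>x. indicator {-s..s} x *\<^sub>R (x^2::real))"
        using True by (auto simp: indicator_def fun_eq_iff b'_def)
      have "(\<integral>x. indicator {-1..1} x * (indicator {-s..s} x * x^2) \<partial>\<mu>) = set_lebesgue_integral \<mu> {-s..s} (\<lambda>x. x\<^sup>2)"
        unfolding eqf set_lebesgue_integral_def by simp
      also have "\<dots> \<le> norm (set_lebesgue_integral \<mu> {-s..s} (\<lambda>x. x\<^sup>2))" by simp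
      also have "\<dots> \<le> c * norm (s powr (2 - \<alpha>))" using hb[OF s] True by (simp add: b'_def)
      also have "\<dots> = c * s powr (2-\<alpha>)" by simp
      also have "\<dots> \<le> C * s powr (2-\<alpha>)" unfolding C_def using G1nn bp spos
        by (intro mult_right_mono) auto
      finally show ?thesis .
    next
      case False
      have "(\<integral>x. indicator {-1..1} x * (indicator {-s..s} x * x^2) \<partial>\<mu>) \<le> G1"
        unfolding G1_def by (rule integral_mono[OF intH intG]) (auto simp: indicator_def)
      also have "G1 = G1 / b' powr (2-\<alpha>) * b' powr (2-\<alpha>)" using bp by simp
      also have "\<dots> \<le> G1 / b' powr (2-\<alpha>) * s powr (2-\<alpha>)"
        using False G1nn bp alpha b'pos by (intro mult_left_mono powr_mono2) auto
      also have "\<dots> \<le> C * s powr (2-\<alpha>)" unfolding C_def using c spos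
        by (intro mult_right_mono) auto
      finally show ?thesis .
    qed
  qed
  then show ?thesis using Cpos by blast
qed

lemma pow2_powr: "((2::real)^k) powr a = (2 powr a)^k"
proof (induction k)
  case (Suc k)
  have "((2::real)^Suc k) powr a = (2 * 2^k) powr a" by simp
  also have "\<dots> = 2 powr a * (2^k) powr a" by (simp add: powr_mult)
  finally show ?case using Suc by simp
qed simp

lemma tail_bound:
  fixes \<mu> :: "real measure" and \<alpha> C :: real
  assumes lm: "levy_measure \<mu>" and alpha: "0 < \<alpha>" and C: "C > 0"
    and HC: "\<forall>s>0. (\<integral>x. indicator {-1..1} x * (indicator {-s..s} x * x^2) \<partial>\<mu>) \<le> C * s powr (2-\<alpha>)"
  shows "\<exists>K. \<forall>w. 0 < w \<longrightarrow> w \<le> 1 \<longrightarrow>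
     (\<integral>x. indicator {-1..1} x * indicator {x. w < \<bar>x\<bar>} x \<partial>\<mu>) \<le> K * w powr (-\<alpha>)"
proof -
  define q where "q = (2::real) powr (-\<alpha>)"
  have q1: "q < 1" unfolding q_def using alpha by (intro powr_less_one) auto
  have q0: "0 < q" unfolding q_def by simp
  define K where "K = 4*C/(1-q)"
  have "(\<integral>x. indicator {-1..1} x * indicator {x. w < \<bar>x\<bar>} x \<partial>\<mu>) \<le> K * w powr (-\<alpha>)"
    if w: "0 < w" "w \<le> 1" for w
  proof -
    obtain N where N: "1/w < 2^N" using real_arch_pow[of 2 "1/w"] by auto
    have wN: "1 < w * 2^N" using N w by (simp add: field_simps)
    have intH: "integrable \<mu> (\<lambda>x. indicator {-1..1} x * (indicator {-s..s} x * x^2 :: real))" for s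
      by (rule int_I_real[OF lm _ zero_le_one]) (auto simp: indicator_def)
    define H where "H s = (\<integral>x. indicator {-1..1} x * (indicator {-s..s} x * x^2) \<partial>\<mu>)" for s
    have eqf: "indicator {-1..1} x * indicator {x. w < \<bar>x\<bar>} x
        = indicator {-1..1} x * (indicator {x. w < \<bar>x\<bar> \<and> \<bar>x\<bar> \<le> w*2^N} x :: real)" for x
      using wN by (auto simp: indicator_def)
    have "(\<integral>x. indicator {-1..1} x * indicator {x. w < \<bar>x\<bar>} x \<partial>\<mu>)
        \<le> (\<integral>x. (\<Sum>k\<in>{1..N}. 4/(w*2^k)^2 * (indicator {-1..1} x * (indicator {-(w*2^k)..w*2^k} x * x^2))) \<partial>\<mu>)"
    proof (rule integral_mono')
      show "integrable \<mu> (\<lambda>x. \<Sum>k\<in>{1..N}. 4/(w*2^k)^2 * (indicator {-1..1} x * (indicator {-(w*2^k)..w*2^k} x * x^2)))"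
        by (rule Bochner_Integration.integrable_sum, rule integrable_mult_right, rule intH)
      show "indicator {-1..1} x * indicator {x. w < \<bar>x\<bar>} x \<le> (\<Sum>k\<in>{1..N}. 4/(w*2^k)^2 * (indicator {-1..1} x * (indicator {-(w*2^k)..w*2^k} x * x^2)))" for x
        using dyadic_pw[OF w(1), of x N] unfolding eqf by (simp add: mult.assoc)
      show "0 \<le> (\<Sum>k\<in>{1..N}. 4/(w*2^k)^2 * (indicator {-1..1} x * (indicator {-(w*2^k)..w*2^k} x * (x^2::real))))" for x
        by (intro sum_nonneg mult_nonneg_nonneg) simp_all
    qed
    also have "\<dots> = (\<Sum>k\<in>{1..N}. 4/(w*2^k)^2 * H (w*2^k))"
      unfolding H_def by (subst Bochner_Integration.integral_sum) (simp_all add: intH)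
    also have "\<dots> \<le> (\<Sum>k\<in>{1..N}. 4/(w*2^k)^2 * (C * (w*2^k) powr (2-\<alpha>)))"
    proof (intro sum_mono mult_left_mono)
      fix k assume "k \<in> {1..N}"
      show "H (w*2^k) \<le> C * (w*2^k) powr (2-\<alpha>)"
        using HC[rule_format, of "w*2^k"] w unfolding H_def by simp
      show "0 \<le> 4/(w*2^k)^2" by simp
    qed
    also have "\<dots> = (\<Sum>k\<in>{1..N}. 4*C * w powr (-\<alpha>) * q^k)"
    proof (rule sum.cong[OF refl])
      fix k assume "k \<in> {1..N}"
      define Y where "Y = w*2^k"
      have y: "0 < Y" using w by (simp add: Y_def)
      have e1: "Y powr (2-\<alpha>) = Y powr 2 * Y powr (-\<alpha>)"
        using powr_add[of Y 2 "-\<alpha>"] by simp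
      have e2: "Y powr 2 = Y^2" using y by (simp add: powr_numeral)
      have e3: "Y powr (-\<alpha>) = w powr (-\<alpha>) * q^k"
        unfolding Y_def q_def using w by (simp add: powr_mult pow2_powr)
      have gen: "4/Z^2 * (C * (Z^2 * P)) = 4*C*P" if "Z \<noteq> 0" for Z P :: real
        using that by (simp add: field_simps)
      show "4/(w*2^k)^2 * (C * (w*2^k) powr (2-\<alpha>)) = 4*C * w powr (-\<alpha>) * q^k"
        unfolding Y_def[symmetric] e1 e2 e3 using gen[of Y] y by (simp add: mult.assoc)
    qed
    also have "\<dots> = 4*C * w powr (-\<alpha>) * (\<Sum>k\<in>{1..N}. q^k)" by (simp add: sum_distrib_left)
    also have "\<dots> \<le> 4*C * w powr (-\<alpha>) * (1/(1-q))"
    proof (rule mult_left_mono)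
      have "(\<Sum>k\<in>{1..N}. q^k) \<le> (\<Sum>k<Suc N. q^k)"
        using q0 by (intro sum_mono2) auto
      also have "\<dots> = (1 - q^Suc N)/(1-q)"
      proof -
        have gp: "(\<Sum>k<n. q^k) = (1 - q^n)/(1-q)" for n using q1 by (simp add: sum_gp_strict)
        show ?thesis by (rule gp)
      qed
      also have "\<dots> \<le> 1/(1-q)" using q0 q1 by (intro divide_right_mono) auto
      finally show "(\<Sum>k\<in>{1..N}. q^k) \<le> 1/(1-q)" .
      show "0 \<le> 4*C * w powr (-\<alpha>)" using C by simp
    qed
    also have "\<dots> = K * w powr (-\<alpha>)" unfolding K_def by simp
    finally show ?thesis .
  qed
  then show ?thesis by blast
qed




lemma L_E:
  fixes P :: "'a measure" and X :: "'a \<Rightarrow> real" and f :: "real \<Rightarrow> real"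
  assumes P: "prob_space P" and Mm: "X \<in> borel_measurable P"
    and f_inner: "\<And>x. \<bar>x\<bar> \<le> 1 \<Longrightarrow> f x = x\<^sup>2"
    and f_outer: "\<And>x. \<bar>x\<bar> > 2 \<Longrightarrow> f x = 0"
    and f_mid: "\<And>x. 1 < \<bar>x\<bar> \<Longrightarrow> \<bar>x\<bar> \<le> 2 \<Longrightarrow> 0 \<le> f x \<and> f x \<le> 2"
    and v: "0 < v"
  shows "0 \<le> (\<integral>\<omega>. rescale f v (X \<omega>) \<partial>P) \<and>
         (\<integral>\<omega>. rescale f v (X \<omega>) \<partial>P) \<le> 6* v^2*(1 - Re (char (distr P borel X) (1/v)))"
proof -
  interpret prob_space P by (rule P)
  have fb: "0 \<le> f y \<and> f y \<le> 6*(1 - cos y)" for y using fbound[OF f_inner f_outer f_mid] .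
  have nn: "0 \<le> (\<integral>\<omega>. rescale f v (X \<omega>) \<partial>P)"
    by (rule Bochner_Integration.integral_nonneg) (simp add: rescale_def fb)
  have b12: "\<bar>6* v^2*(1 - cos y)\<bar> \<le> 12* v^2" for y
  proof -
    have "0 \<le> 1 - cos y" "1 - cos y \<le> 2" using cos_le_one[of y] cos_ge_minus_one[of y] by linarith+
    then have "0 \<le> 6* v^2*(1 - cos y)" "6* v^2*(1 - cos y) \<le> 6* v^2*2"
      by (simp, intro mult_left_mono, simp_all)
    then show ?thesis by simp
  qed
  have intc: "integrable P (\<lambda>\<omega>. 6* v^2*(1 - cos (1/v * X \<omega>)))"
  proof (rule integrable_const_bound[where B="12* v^2"])
    show "AE \<omega> in P. norm (6* v^2*(1 - cos (1/v * X \<omega>))) \<le> 12* v^2"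
      by (intro AE_I2) (simp only: real_norm_def b12)
    show "(\<lambda>\<omega>. 6* v^2*(1 - cos (1/v * X \<omega>))) \<in> borel_measurable P" using Mm by measurable
  qed
  have le: "(\<integral>\<omega>. rescale f v (X \<omega>) \<partial>P) \<le> (\<integral>\<omega>. 6* v^2*(1 - cos (1/v * X \<omega>)) \<partial>P)"
  proof (rule integral_mono'[OF intc])
    fix \<omega>
    have "v^2 * f (X \<omega> / v) \<le> v^2 * (6*(1 - cos (X \<omega> / v)))"
      using fb[of "X \<omega> / v"] by (intro mult_left_mono) auto
    then show "rescale f v (X \<omega>) \<le> 6* v^2*(1 - cos (1/v * X \<omega>))"
      by (simp add: rescale_def algebra_simps)
    show "0 \<le> 6* v^2*(1 - cos (1/v * X \<omega>))" using cos_le_one by simp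
  qed
  have intcos: "integrable P (\<lambda>\<omega>. cos (1/v * X \<omega>))"
  proof (rule integrable_const_bound[where B=1])
    show "AE \<omega> in P. norm (cos (1/v * X \<omega>)) \<le> 1" by (intro AE_I2) simp
    show "(\<lambda>\<omega>. cos (1/v * X \<omega>)) \<in> borel_measurable P" using Mm by measurable
  qed
  have ee: "(\<integral>\<omega>. 6* v^2*(1 - cos (1/v * X \<omega>)) \<partial>P) = 6* v^2*(1 - (\<integral>\<omega>. cos (1/v * X \<omega>) \<partial>P))"
    using intcos by (simp add: prob_space)
  have ch: "char (distr P borel X) (1/v) = (\<integral>\<omega>. iexp (1/v * X \<omega>) \<partial>P)"
    unfolding char_def using Mm by (simp add: integral_distr)
  have inti: "integrable P (\<lambda>\<omega>. iexp (1/v * X \<omega>))"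
  proof (rule integrable_iexp)
    show "(\<lambda>x. complex_of_real (1 / v * X x)) \<in> borel_measurable P" using Mm by measurable
  qed simp
  have re: "Re (char (distr P borel X) (1/v)) = (\<integral>\<omega>. cos (1/v * X \<omega>) \<partial>P)"
    unfolding ch integral_Re[OF inti, symmetric] by (simp add: Re_exp)
  show ?thesis using nn le ee re v by simp
qed

lemma L_exp:
  fixes z :: complex and t :: real
  assumes t: "0 \<le> t" and a: "Re z \<le> 0"
  shows "1 - Re (exp (complex_of_real t * z)) \<le> t * (- Re z) + (t * Im z)^2/2"
proof -
  have r: "Re (exp (complex_of_real t * z)) = exp (t * Re z) * cos (t * Im z)"
    by (simp add: Re_exp)
  have e1: "exp (t * Re z) \<le> 1" using mult_nonneg_nonpos[OF t a] by simp
  have e2: "1 + t * Re z \<le> exp (t * Re z)" by (rule exp_ge_add_one_self)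
  have e0: "0 < exp (t * Re z)" by simp
  have c1: "1 - (t * Im z)^2/2 \<le> cos (t * Im z)" using T3[of "t * Im z"] by linarith
  have "exp (t * Re z) * (1 - (t * Im z)^2/2) \<le> exp (t * Re z) * cos (t * Im z)"
    using c1 e0 by (intro mult_left_mono) auto
  then have f1: "exp (t * Re z) - exp (t * Re z) * ((t * Im z)^2/2) \<le> exp (t * Re z) * cos (t * Im z)"
    by (simp only: right_diff_distrib mult_1_right)
  have f2: "exp (t * Re z) * ((t * Im z)^2/2) \<le> (t * Im z)^2/2"
    using mult_left_le_one_le[of "(t*Im z)^2/2" "exp (t*Re z)"] e1 e0 by simp
  show ?thesis unfolding r using e2 f1 f2 by linarith
qed




lemma L_psi:
  fixes \<mu> :: "real measure" and \<alpha> C K v :: real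
  assumes lm: "levy_measure \<mu>" and alpha: "0 < \<alpha>" "\<alpha> < 2" and C: "C > 0"
    and HC: "\<forall>s>0. (\<integral>x. indicator {-1..1} x * (indicator {-s..s} x * x^2) \<partial>\<mu>) \<le> C * s powr (2-\<alpha>)"
    and KB: "\<forall>w. 0 < w \<longrightarrow> w \<le> 1 \<longrightarrow>
     (\<integral>x. indicator {-1..1} x * indicator {x. w < \<bar>x\<bar>} x \<partial>\<mu>) \<le> K * w powr (-\<alpha>)"
    and v: "0 < v" "v \<le> 1"
  shows "Re (set_lebesgue_integral \<mu> {-1..1} (\<lambda>x. iexp (1/v * x) - 1 - \<i> * complex_of_real (1/v * x))) \<le> 0
    \<and> - Re (set_lebesgue_integral \<mu> {-1..1} (\<lambda>x. iexp (1/v * x) - 1 - \<i> * complex_of_real (1/v * x)))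
         \<le> (C/2 + 2*\<bar>K\<bar>) * v powr (-\<alpha>)
    \<and> \<bar>Im (set_lebesgue_integral \<mu> {-1..1} (\<lambda>x. iexp (1/v * x) - 1 - \<i> * complex_of_real (1/v * x)))\<bar>
         \<le> (C + \<bar>K\<bar> + \<bar>\<integral>x. indicator {-1..1} x * x^2 \<partial>\<mu>\<bar>) * v powr (-1 - \<alpha>/2)"
proof -
  define r where "r = 1/v"
  have r0: "0 < r" using v by (simp add: r_def)
  have r1: "1 \<le> r" using v by (simp add: r_def)
  define \<psi> where "\<psi> = set_lebesgue_integral \<mu> {-1..1} (\<lambda>x. iexp (r * x) - 1 - \<i> * complex_of_real (r * x))"
  define G1 where "G1 = (\<integral>x. indicator {-1..1} x * (x^2::real) \<partial>\<mu>)"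
  define H where "H = (\<integral>x. indicator {-1..1} x * (indicator {-v..v} x * x^2 :: real) \<partial>\<mu>)"
  define T where "T = (\<integral>x. indicator {-1..1} x * (indicator {x. v < \<bar>x\<bar>} x :: real) \<partial>\<mu>)"
  have HB: "H \<le> C * v powr (2-\<alpha>)" using HC v by (simp add: H_def)
  have TB: "T \<le> \<bar>K\<bar> * v powr (-\<alpha>)"
  proof -
    have "T \<le> K * v powr (-\<alpha>)" using KB v by (simp add: T_def)
    also have "\<dots> \<le> \<bar>K\<bar> * v powr (-\<alpha>)" by (intro mult_right_mono) auto
    finally show ?thesis .
  qed
  have intH: "integrable \<mu> (\<lambda>x. indicator {-1..1} x * (indicator {-v..v} x * x^2 :: real))"
    by (rule int_I_real[OF lm _ zero_le_one]) (auto simp: indicator_def)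
  have intG: "integrable \<mu> (\<lambda>x. indicator {-1..1} x * (x^2 :: real))"
    by (rule int_I_real[OF lm _ zero_le_one]) auto
  have intT: "integrable \<mu> (\<lambda>x. indicator {-1..1} x * (indicator {x. v < \<bar>x\<bar>} x :: real))"
  proof (rule int_I_real[OF lm _, where c="1/v^2"])
    fix x :: real assume "x \<in> {-1..1}"
    show "\<bar>indicator {x. v < \<bar>x\<bar>} x\<bar> \<le> 1/v^2 * x^2"
    proof (cases "v < \<bar>x\<bar>")
      case True
      then have "v^2 \<le> x^2" using power_mono[of v "\<bar>x\<bar>" 2] v by simp
      then have "1 \<le> 1/v^2 * x^2" using v by (simp add: field_simps)
      then show ?thesis using True by simp
    qed simp
  qed auto
  have intpsi: "integrable \<mu> (\<lambda>x. indicator {-1..1} x *\<^sub>R (iexp (r * x) - 1 - \<i> * complex_of_real (r * x)))"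
  proof (rule int_I[OF lm _, where c="r^2/2"])
    fix x :: real
    show "norm (iexp (r * x) - 1 - \<i> * complex_of_real (r * x)) \<le> r^2/2 * x^2"
      using T4[of "r*x"] by (simp add: power_mult_distrib)
  qed (auto)
  have Repsi: "Re \<psi> = (\<integral>x. indicator {-1..1} x * (cos (r*x) - 1) \<partial>\<mu>)"
    unfolding \<psi>_def set_lebesgue_integral_def integral_Re[OF intpsi, symmetric]
    by (simp add: Re_exp)
  have Impsi: "Im \<psi> = (\<integral>x. indicator {-1..1} x * (sin (r*x) - r*x) \<partial>\<mu>)"
    unfolding \<psi>_def set_lebesgue_integral_def integral_Im[OF intpsi, symmetric]
    by (simp add: Im_exp)
  define A where "A = (\<integral>x. indicator {-1..1} x * (1 - cos (r*x)) \<partial>\<mu>)"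
  have Aeq: "- Re \<psi> = A"
  proof -
    have "(\<lambda>x. indicator {-1..1} x * (1 - cos (r*x))) = (\<lambda>x. - (indicator {-1..1} x * (cos (r*x) - 1)))"
      by (auto simp: fun_eq_iff algebra_simps)
    then show ?thesis unfolding A_def Repsi by simp
  qed
  have A0: "0 \<le> A" unfolding A_def
    by (rule Bochner_Integration.integral_nonneg) (simp add: indicator_def)
  have intA: "integrable \<mu> (\<lambda>x. indicator {-1..1} x * (1 - cos (r*x)))"
  proof (rule int_I_real[OF lm _, where c="r^2/2"])
    fix x :: real
    have "\<bar>1 - cos (r*x)\<bar> = 1 - cos (r*x)" using cos_le_one[of "r*x"] by simp
    then show "\<bar>1 - cos (r*x)\<bar> \<le> r^2/2 * x^2" using T3[of "r*x"] by (simp add: power_mult_distrib)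
  qed auto
  have AB: "A \<le> r^2/2 * H + 2 * T"
  proof -
    have "A \<le> (\<integral>x. r^2/2 * (indicator {-1..1} x * (indicator {-v..v} x * x^2))
                  + 2 * (indicator {-1..1} x * indicator {x. v < \<bar>x\<bar>} x) \<partial>\<mu>)"
      unfolding A_def
    proof (rule integral_mono[OF intA])
      show "integrable \<mu> (\<lambda>x. r^2/2 * (indicator {-1..1} x * (indicator {-v..v} x * x^2))
                  + 2 * (indicator {-1..1} x * indicator {x. v < \<bar>x\<bar>} x))"
        using intH intT by (intro Bochner_Integration.integrable_add integrable_mult_right)
      fix x :: real
      show "indicator {-1..1} x * (1 - cos (r*x)) \<le> r^2/2 * (indicator {-1..1} x * (indicator {-v..v} x * x^2))
                  + 2 * (indicator {-1..1} x * indicator {x. v < \<bar>x\<bar>} x)"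
      proof (cases "x \<in> {-1..1}")
        case True
        show ?thesis
        proof (cases "\<bar>x\<bar> \<le> v")
          case True2: True
          then have "x \<in> {-v..v}" by auto
          then show ?thesis using True True2 T3[of "r*x"] by (simp add: power_mult_distrib)
        next
          case False
          then have "indicator {-v..v} x = (0::real)" "indicator {x. v < \<bar>x\<bar>} x = (1::real)"
            by (auto simp: indicator_def)
          moreover have "indicator {-1..1} x = (1::real)" using True by simp
          ultimately show ?thesis using cos_ge_minus_one[of "r*x"] by simp
        qed
      qed (simp)
    qed
    also have "\<dots> = r^2/2 * H + 2 * T"
      unfolding H_def T_def using intH intT by simp
    finally show ?thesis .
  qed
  have intS: "integrable \<mu> (\<lambda>x. indicator {-1..1} x * (sin (r*x) - r*x))"
  proof (rule int_I_real[OF lm _, where c="r^3/6"])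
    fix x :: real assume x: "x \<in> {-1..1}"
    have ax: "\<bar>x\<bar> \<le> 1" using x by auto
    have "\<bar>x\<bar>^3 \<le> \<bar>x\<bar>^2" by (rule power_decreasing) (use ax in auto)
    then have "r^3 * \<bar>x\<bar>^3 \<le> r^3 * x^2" using r0 by (intro mult_left_mono) auto
    moreover have "\<bar>sin (r*x) - r*x\<bar> \<le> r^3 * \<bar>x\<bar>^3 / 6"
      using T2[of "r*x"] r0 by (simp add: abs_mult power_mult_distrib)
    ultimately show "\<bar>sin (r*x) - r*x\<bar> \<le> r^3/6 * x^2" by simp
  qed (use r0 in auto)
  define lam where "lam = v powr (\<alpha>/2)"
  have l0: "0 < lam" using v by (simp add: lam_def)
  define R where "R x = r^2 * (indicator {-1..1} x * (indicator {-v..v} x * x^2))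
      + (r*lam) * (indicator {-1..1} x * indicator {x. v < \<bar>x\<bar>} x) + (r/lam) * (indicator {-1..1} x * x^2)" for x :: real
  have intR: "integrable \<mu> R"
    unfolding R_def using intH intT intG
    by (intro Bochner_Integration.integrable_add integrable_mult_right)
  have IB: "\<bar>Im \<psi>\<bar> \<le> r^2 * H + (r*lam) * T + (r/lam) * G1"
  proof -
    have "\<bar>Im \<psi>\<bar> \<le> (\<integral>x. R x \<partial>\<mu>)"
      unfolding Impsi
    proof (rule integral_abs_bound_integral[OF intS intR])
      fix x :: real
      show "\<bar>indicator {-1..1} x * (sin (r*x) - r*x)\<bar> \<le> R x"
      proof (cases "x \<in> {-1..1}")
        case True
        then have i1: "indicator {-1..1} x = (1::real)" by simp
        show ?thesis
        proof (cases "\<bar>x\<bar> \<le> v")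
          case True2: True
          then have "indicator {-v..v} x = (1::real)" "indicator {x. v < \<bar>x\<bar>} x = (0::real)"
            by (auto simp: indicator_def)
          then have Rx: "R x = r^2 * x^2 + (r/lam) * x^2" unfolding R_def using i1 by simp
          have rx1: "\<bar>r*x\<bar> \<le> 1"
          proof -
            have "\<bar>r*x\<bar> = r * \<bar>x\<bar>" using r0 by (simp add: abs_mult)
            also have "\<dots> \<le> r * v" using True2 r0 by (intro mult_left_mono) auto
            also have "\<dots> = 1" using v by (simp add: r_def)
            finally show ?thesis .
          qed
          have "\<bar>r*x\<bar>^3 \<le> \<bar>r*x\<bar>^2" by (rule power_decreasing) (use rx1 in auto)
          then have c3: "\<bar>r*x\<bar>^3 \<le> r^2 * x^2" by (simp add: power_mult_distrib)
          have "\<bar>sin (r*x) - r*x\<bar> \<le> r^2 * x^2"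
            using T2[of "r*x"] c3 abs_ge_zero[of "sin (r*x) - r*x"] by linarith
          moreover have "0 \<le> (r/lam) * x^2" using r0 l0 by simp
          ultimately show ?thesis unfolding Rx using i1 by simp
        next
          case False
          then have "indicator {-v..v} x = (0::real)" "indicator {x. v < \<bar>x\<bar>} x = (1::real)"
            by (auto simp: indicator_def)
          then have Rx: "R x = r*lam + (r/lam) * x^2" unfolding R_def using i1 by simp
          have "\<bar>sin (r*x) - r*x\<bar> \<le> \<bar>sin (r*x)\<bar> + \<bar>r*x\<bar>" by (rule abs_triangle_ineq4)
          also have "\<dots> \<le> 2 * \<bar>r*x\<bar>" using abs_sin_x_le_abs_x[of "r*x"] by simp
          also have "\<dots> = r * (2*\<bar>x\<bar>)" using r0 by (simp add: abs_mult)
          also have "\<dots> \<le> r * (lam + x^2/lam)"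
          proof (rule mult_left_mono)
            have "0 \<le> (\<bar>x\<bar> - lam)^2" by simp
            then have "2*\<bar>x\<bar>*lam \<le> lam^2 + x^2"
              by (simp add: power2_eq_square algebra_simps)
            then show "2*\<bar>x\<bar> \<le> lam + x^2/lam" using l0
              by (simp add: field_simps power2_eq_square)
          qed (use r0 in simp)
          also have "\<dots> = R x" unfolding Rx using l0 by (simp add: field_simps)
          finally show ?thesis using i1 by simp
        qed
      next
        case False
        then show ?thesis unfolding R_def using r0 l0 by simp
      qed
    qed
    also have "(\<integral>x. R x \<partial>\<mu>) = r^2 * H + (r*lam) * T + (r/lam) * G1"
      unfolding R_def H_def T_def G1_def using intH intT intG by simp
    finally show ?thesis .
  qed
  have pa: "v powr a * v powr b = v powr (a+b)" for a b by (simp add: powr_add)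
  have rp: "r = v powr (-1)" using v by (simp add: r_def powr_neg_one)
  have P1: "r^2 * v powr (2-\<alpha>) = v powr (-\<alpha>)"
  proof -
    have "r^2 = v powr (-2)" using v by (simp add: r_def powr_minus_divide power_one_over)
    then show ?thesis by (simp add: pa)
  qed
  have P2: "r*lam* v powr (-\<alpha>) = v powr (-1 - \<alpha>/2)"
    unfolding rp lam_def pa by (rule arg_cong[where f="(powr) v"]) linarith
  have P3: "r/lam = v powr (-1 - \<alpha>/2)"
    unfolding rp lam_def by (rule powr_diff[symmetric])
  have P4: "v powr (-\<alpha>) \<le> v powr (-1 - \<alpha>/2)"
    by (rule powr_mono') (use alpha v in auto)
  have vpos: "0 \<le> v powr (-\<alpha>)" "0 \<le> v powr (-1 - \<alpha>/2)" by simp_all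
  have part1: "- Re \<psi> \<le> (C/2 + 2*\<bar>K\<bar>) * v powr (-\<alpha>)"
  proof -
    have "- Re \<psi> \<le> r^2/2 * H + 2 * T" using Aeq AB by simp
    also have "\<dots> \<le> r^2/2 * (C * v powr (2-\<alpha>)) + 2 * (\<bar>K\<bar> * v powr (-\<alpha>))"
      using HB TB by (intro add_mono mult_left_mono) auto
    also have "\<dots> = C/2 * (r^2 * v powr (2-\<alpha>)) + 2 * \<bar>K\<bar> * v powr (-\<alpha>)" by simp
    also have "\<dots> = (C/2 + 2*\<bar>K\<bar>) * v powr (-\<alpha>)" unfolding P1 by (simp add: algebra_simps)
    finally show ?thesis .
  qed
  have part2: "\<bar>Im \<psi>\<bar> \<le> (C + \<bar>K\<bar> + \<bar>G1\<bar>) * v powr (-1 - \<alpha>/2)"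
  proof -
    have "\<bar>Im \<psi>\<bar> \<le> r^2 * (C * v powr (2-\<alpha>)) + (r*lam) * (\<bar>K\<bar> * v powr (-\<alpha>)) + (r/lam) * \<bar>G1\<bar>"
      using IB HB TB r0 l0 by (smt (verit) abs_ge_self mult_left_mono zero_le_power2 divide_nonneg_pos mult_nonneg_nonneg less_imp_le)
    also have "\<dots> = C * v powr (-\<alpha>) + \<bar>K\<bar> * v powr (-1 - \<alpha>/2) + \<bar>G1\<bar> * v powr (-1 - \<alpha>/2)"
      using P1 P2 P3 by (simp add: algebra_simps)
    also have "\<dots> \<le> C * v powr (-1 - \<alpha>/2) + \<bar>K\<bar> * v powr (-1 - \<alpha>/2) + \<bar>G1\<bar> * v powr (-1 - \<alpha>/2)"
      using P4 C by simp
    also have "\<dots> = (C + \<bar>K\<bar> + \<bar>G1\<bar>) * v powr (-1 - \<alpha>/2)" by (simp add: algebra_simps)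
    finally show ?thesis .
  qed
  have "Re \<psi> \<le> 0" using Aeq A0 by simp
  then show ?thesis using part1 part2 unfolding \<psi>_def G1_def r_def by simp
qed




theorem proposition4p3:
  fixes P :: "'a measure" and M :: "real \<Rightarrow> 'a \<Rightarrow> real"
    and \<mu> :: "real measure" and \<alpha> \<beta> :: real and f :: "real \<Rightarrow> real"
  assumes levy: "levy_process P M"
    and lm: "levy_measure \<mu>"
    and supp: "emeasure \<mu> (UNIV - {-1..1}) = 0"
    and char_M: "\<And>t u. t \<ge> 0 \<Longrightarrow>
        char (distr P borel (M t)) u =
        exp (complex_of_real t *
          set_lebesgue_integral \<mu> {-1..1} (\<lambda>x. iexp (u * x) - 1 - \<i> * complex_of_real (u * x)))"
    and alpha: "0 < \<alpha>" "\<alpha> < 2"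
    and growth: "(\<lambda>v. set_lebesgue_integral \<mu> {-v..v} (\<lambda>x. x\<^sup>2)) \<in> O[at_right 0](\<lambda>v. v powr (2 - \<alpha>))"
    and f_smooth: "C_infinity f"
    and f_inner: "\<And>x. \<bar>x\<bar> \<le> 1 \<Longrightarrow> f x = x\<^sup>2"
    and f_outer: "\<And>x. \<bar>x\<bar> > 2 \<Longrightarrow> f x = 0"
    and f_mid: "\<And>x. 1 < \<bar>x\<bar> \<Longrightarrow> \<bar>x\<bar> \<le> 2 \<Longrightarrow> 0 \<le> f x \<and> f x \<le> 2"
    and beta: "0 < \<beta>" "\<beta> < 1/2"
  shows "(\<lambda>t. \<integral>\<omega>. rescale f (t powr \<beta>) (M t \<omega>) \<partial>P)
           \<in> O[at_right 0](\<lambda>t. t powr (1 + \<beta> * (2 - \<alpha>)))"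
proof -
  have Pps: "prob_space P" and Mm: "\<And>t. 0 \<le> t \<Longrightarrow> M t \<in> borel_measurable P"
    using levy unfolding levy_process_def by auto
  obtain C where C: "C > 0"
    and HC: "\<forall>s>0. (\<integral>x. indicator {-1..1} x * (indicator {-s..s} x * x^2) \<partial>\<mu>) \<le> C * s powr (2-\<alpha>)"
    using H_global[OF lm growth alpha(2)] by blast
  obtain K where KB: "\<forall>w. 0 < w \<longrightarrow> w \<le> 1 \<longrightarrow>
     (\<integral>x. indicator {-1..1} x * indicator {x. w < \<bar>x\<bar>} x \<partial>\<mu>) \<le> K * w powr (-\<alpha>)"
    using tail_bound[OF lm alpha(1) C HC] by blast
  define G1 where "G1 = (\<integral>x. indicator {-1..1} x * (x^2::real) \<partial>\<mu>)"
  define D where "D = C + \<bar>K\<bar> + \<bar>G1\<bar>"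
  define A0 where "A0 = C/2 + 2*\<bar>K\<bar>"
  define B where "B = 6*A0 + 3*D^2"
  have main: "norm (\<integral>\<omega>. rescale f (t powr \<beta>) (M t \<omega>) \<partial>P) \<le> B * norm (t powr (1 + \<beta> * (2 - \<alpha>)))"
    if t: "0 < t" "t < 1" for t
  proof -
    define v where "v = t powr \<beta>"
    have v0: "0 < v" using t by (simp add: v_def)
    have v1: "v \<le> 1" unfolding v_def using t beta by (intro powr_le1) auto
    define \<psi> where "\<psi> = set_lebesgue_integral \<mu> {-1..1} (\<lambda>x. iexp (1/v * x) - 1 - \<i> * complex_of_real (1/v * x))"
    define X where "X = v powr (-\<alpha>)"
    define W where "W = v powr (-1 - \<alpha>/2)"
    have Ps: "Re \<psi> \<le> 0" "- Re \<psi> \<le> A0 * X" "\<bar>Im \<psi>\<bar> \<le> D * W"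
      using L_psi[OF lm alpha(1) alpha(2) C HC KB v0 v1]
      unfolding \<psi>_def A0_def X_def D_def W_def G1_def by auto
    define E where "E = (\<integral>\<omega>. rescale f v (M t \<omega>) \<partial>P)"
    have LE: "0 \<le> E" "E \<le> 6 * v^2*(1 - Re (char (distr P borel (M t)) (1/v)))"
      using L_E[OF Pps Mm[of t] f_inner f_outer f_mid v0] t unfolding E_def by auto
    have ch: "char (distr P borel (M t)) (1/v) = exp (complex_of_real t * \<psi>)"
      unfolding \<psi>_def using char_M[of t "1/v"] t by simp
    have LX: "1 - Re (exp (complex_of_real t * \<psi>)) \<le> t * (- Re \<psi>) + (t * Im \<psi>)^2/2"
      using L_exp[of t \<psi>] t Ps(1) by simp
    have DW: "0 \<le> D * W" using Ps(3) by linarith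
    have sq: "(Im \<psi>)^2 \<le> (D*W)^2"
      using power_mono[OF Ps(3), of 2] by simp
    have q1: "v^2 * X = t powr (\<beta>*(2-\<alpha>))"
    proof -
      have "v^2 * X = v powr 2 * v powr (-\<alpha>)" using v0 by (simp add: X_def)
      also have "\<dots> = v powr (2-\<alpha>)" by (simp add: powr_add[symmetric])
      also have "\<dots> = t powr (\<beta>*(2-\<alpha>))" by (simp add: v_def powr_powr)
      finally show ?thesis .
    qed
    have q2: "v^2 * W^2 = t powr (-(\<alpha>*\<beta>))"
    proof -
      have "v^2 * W^2 = v powr 2 * (v powr (-1 - \<alpha>/2) * v powr (-1 - \<alpha>/2))"
        using v0 by (simp add: W_def power2_eq_square)
      also have "\<dots> = v powr (2 + ((-1 - \<alpha>/2) + (-1 - \<alpha>/2)))" by (simp add: powr_add[symmetric])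
      also have "\<dots> = v powr (-\<alpha>)" by (rule arg_cong[where f="(powr) v"]) linarith
      also have "\<dots> = t powr (-(\<alpha>*\<beta>))" by (simp add: v_def powr_powr mult.commute)
      finally show ?thesis .
    qed
    have q3: "t * t powr (\<beta>*(2-\<alpha>)) = t powr (1 + \<beta>*(2-\<alpha>))"
      using t by (simp add: powr_add)
    have q4: "t^2 * t powr (-(\<alpha>*\<beta>)) \<le> t powr (1 + \<beta>*(2-\<alpha>))"
    proof -
      have "t^2 * t powr (-(\<alpha>*\<beta>)) = t powr 2 * t powr (-(\<alpha>*\<beta>))" using t by simp
      also have "\<dots> = t powr (2 + -(\<alpha>*\<beta>))" by (rule powr_add[symmetric])
      also have "\<dots> \<le> t powr (1 + \<beta>*(2-\<alpha>))"
        by (rule powr_mono') (use t beta in \<open>auto simp: algebra_simps\<close>)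
      finally show ?thesis .
    qed
    have A0nn: "0 \<le> A0" using C by (simp add: A0_def)
    have "E \<le> 6 * v^2*(t * (- Re \<psi>) + (t * Im \<psi>)^2/2)"
      using LE(2) LX unfolding ch by (smt (verit) mult_left_mono zero_le_power2 mult_nonneg_nonneg)
    also have "\<dots> \<le> 6 * v^2*(t * (A0 * X) + t^2 * (D*W)^2/2)"
    proof -
      have "t * (- Re \<psi>) \<le> t * (A0 * X)" using Ps(2) t by (intro mult_left_mono) auto
      moreover have "(t * Im \<psi>)^2 \<le> t^2 * (D*W)^2"
        using sq by (simp add: power_mult_distrib mult_left_mono)
      ultimately show ?thesis by (intro mult_left_mono) auto
    qed
    also have "\<dots> = 6*A0 * (t * (v^2 * X)) + 3*D^2 * (t^2 * (v^2 * W^2))"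
      by (simp add: algebra_simps power_mult_distrib)
    also have "\<dots> = 6*A0 * t powr (1 + \<beta>*(2-\<alpha>)) + 3*D^2 * (t^2 * t powr (-(\<alpha>*\<beta>)))"
      unfolding q1 q2 q3 ..
    also have "\<dots> \<le> 6*A0 * t powr (1 + \<beta>*(2-\<alpha>)) + 3*D^2 * t powr (1 + \<beta>*(2-\<alpha>))"
      using q4 by (intro add_left_mono mult_left_mono) auto
    also have "\<dots> = B * t powr (1 + \<beta>*(2-\<alpha>))" by (simp add: B_def algebra_simps)
    finally have "E \<le> B * t powr (1 + \<beta>*(2-\<alpha>))" .
    then show ?thesis using LE(1) unfolding E_def v_def by simp
  qed
  have ev: "eventually (\<lambda>t. 0 < t \<and> t < (1::real)) (at_right 0)"
    unfolding eventually_at_right_field by (intro exI[of _ 1]) auto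
  show ?thesis
    by (rule bigoI[where c=B]) (use ev in \<open>eventually_elim\<close>, use main in auto)
qed

end
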